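(* For every positive integer $k$, $$\sum_{\mathbf{o}\in\mathcal{O}_k}P(\mathbf{o})=1,$$ i.e., $P$ is a probability measure on $\mathcal{O}_k$.
   Context: For a positive integer $k$, $\mathcal{O}_k$ is the set of all multisets $\mathbf{o}=\{o_1,\dots,o_r\}$ of odd positive integers with $\sum_{i=1}^r o_i=k$ (e.g. $\mathcal{O}_6=\{\{1,5\},\{3,3\},\{3,1,1,1\},\{1,1,1,1,1,1\}\}$). For $\mathbf{o}\in\mathcal{O}_k$ with $r$ elements, $c(\mathbf{o},i)$ denotes the number of times $i$ appears in $\mathbf{o}$, and $P(\mathbf{o})=\dfrac{2^{r-1}}{\prod_{i=1}^k i^{c(\mathbf{o},i)}\,c(\mathbf{o},i)!}$. *)

theory Defs
  imports "HOL-Analysis.Analysis" "HOL-Library.Multiset"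
begin

definition odd_parts :: "nat \<Rightarrow> nat multiset set" where
  "odd_parts k = {M. (\<forall>i\<in>#M. odd i \<and> 0 < i) \<and> sum_mset M = k}"

text \<open>The weight P(o), where r = size M and c(o,i) = count M i.\<close>
definition P_weight :: "nat \<Rightarrow> nat multiset \<Rightarrow> real" where
  "P_weight k M = 2 ^ (size M - 1) /
     (\<Prod>i\<in>{1..k}. real i ^ count M i * fact (count M i))"

end

theory Submission
  imports Defs
begin

definition ww :: "nat multiset \<Rightarrow> real" where
  "ww M = 2 ^ size M / (\<Prod>j\<in>set_mset M. real j ^ count M j * fact (count M j))"

definition SS :: "nat \<Rightarrow> nat set" where
  "SS k = {i\<in>{1..k}. odd i}"

lemma prod_ext:
  assumes "finite A" "set_mset M \<subseteq> A"
  shows "(\<Prod>j\<in>A. real j ^ count M j * fact (count M j)) =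
         (\<Prod>j\<in>set_mset M. real j ^ count M j * fact (count M j))"
  by (rule prod.mono_neutral_right) (use assms in \<open>auto simp: not_in_iff\<close>)

lemma sum_mset_count: "real (sum_mset M) = (\<Sum>x\<in>set_mset M. real x * real (count M x))"
proof (induction M)
  case empty
  then show ?case by simp
next
  case (add x M)
  show ?case
  proof (cases "x \<in># M")
    case True
    have "(\<Sum>y\<in>set_mset M. real y * real (count (add_mset x M) y))
        = (\<Sum>y\<in>set_mset M. real y * real (count M y)) + real x"
    proof -
      have "(\<Sum>y\<in>set_mset M. real y * real (count (add_mset x M) y))
         = (\<Sum>y\<in>set_mset M. real y * real (count M y) + (if y = x then real x else 0))"
        by (rule sum.cong) (auto simp: algebra_simps)
      also have "\<dots> = (\<Sum>y\<in>set_mset M. real y * real (count M y)) + real x"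
        using True by (simp add: sum.distrib)
      finally show ?thesis .
    qed
    then show ?thesis using True add by (simp add: insert_absorb)
  next
    case False
    have "(\<Sum>y\<in>set_mset M. real y * real (count (add_mset x M) y))
        = (\<Sum>y\<in>set_mset M. real y * real (count M y))"
      by (rule sum.cong) (use False in auto)
    then show ?thesis using False add by (simp add: count_eq_zero_iff)
  qed
qed

lemma lemB:
  assumes "i \<in># M" "0 < i"
  shows "real i * real (count M i) * ww M = 2 * ww (M - {#i#})"
proof -
  define c where "c = count M i"
  define M' where "M' = M - {#i#}"
  define A where "A = set_mset M"
  define f where "f N j = real j ^ count N j * fact (count N j)" for N j
  have c1: "c \<ge> 1" using assms by (simp add: c_def)
  have fA: "finite A" by (simp add: A_def)
  have sub: "set_mset M' \<subseteq> A" unfolding M'_def A_def by (auto dest: in_diffD)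
  have Q': "(\<Prod>j\<in>set_mset M'. f M' j) = (\<Prod>j\<in>A. f M' j)"
    unfolding f_def using prod_ext[OF fA sub] by simp
  have iA: "i \<in> A" using assms by (simp add: A_def)
  have QM: "(\<Prod>j\<in>A. f M j) = f M i * (\<Prod>j\<in>A-{i}. f M j)"
    using prod.remove[OF fA iA] by simp
  have QM': "(\<Prod>j\<in>A. f M' j) = f M' i * (\<Prod>j\<in>A-{i}. f M' j)"
    using prod.remove[OF fA iA] by simp
  have eqr: "(\<Prod>j\<in>A-{i}. f M' j) = (\<Prod>j\<in>A-{i}. f M j)"
    by (rule prod.cong) (auto simp: f_def M'_def)
  have cM': "count M' i = c - 1" by (simp add: M'_def c_def)
  have fi: "f M i = real i * real c * f M' i"
  proof -
    obtain d where d: "c = Suc d" using c1 by (cases c) auto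
    show ?thesis unfolding f_def cM' by (simp add: c_def[symmetric] d algebra_simps)
  qed
  have "0 < size M" using assms by (metis empty_iff gr0I set_mset_empty size_eq_0_iff_empty)
  then have sz: "size M = Suc (size M')" using assms by (simp add: M'_def size_Diff_singleton)
  have pos: "real i * real c \<noteq> 0" using assms c1 by simp
  have "ww M = 2 ^ size M / (\<Prod>j\<in>A. f M j)" by (simp add: ww_def A_def f_def)
  moreover have "ww M' = 2 ^ size M' / (\<Prod>j\<in>A. f M' j)" using Q' by (simp add: ww_def f_def)
  ultimately show ?thesis
    using QM QM' eqr fi sz pos unfolding c_def[symmetric] M'_def[symmetric]
    by (simp add: field_simps)
qed

lemma elem_le: "i \<in># M \<Longrightarrow> i \<le> sum_mset (M::nat multiset)"
  by (metis le_add1 sum_mset.remove)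

lemma size_le_sum: "(\<forall>i\<in>#M. 0 < i) \<Longrightarrow> size M \<le> sum_mset (M::nat multiset)"
  by (induction M) auto

lemma finite_odd_parts: "finite (odd_parts k)"
proof -
  have "odd_parts k \<subseteq> (\<Union>n\<in>{..k}. multisets_of_size {1..k} n)"
  proof
    fix M assume M: "M \<in> odd_parts k"
    have sk: "sum_mset M = k" using M by (simp add: odd_parts_def)
    have pos: "\<forall>i\<in>#M. 0 < i" using M by (simp add: odd_parts_def)
    have "size M \<le> k" using size_le_sum[OF pos] sk by simp
    moreover have "set_mset M \<subseteq> {1..k}"
    proof
      fix x assume x: "x \<in># M"
      have "0 < x" using pos x by blast
      moreover have "x \<le> k" using elem_le[OF x] sk by simp
      ultimately show "x \<in> {1..k}" by simp
    qed
    ultimately show "M \<in> (\<Union>n\<in>{..k}. multisets_of_size {1..k} n)"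
      by (simp add: multisets_of_size_def)
  qed
  moreover have "finite (\<Union>n\<in>{..k}. multisets_of_size {1..k} n)" by blast
  ultimately show ?thesis by (rule finite_subset)
qed

lemma lemA:
  assumes "M \<in> odd_parts k"
  shows "real k * ww M = (\<Sum>i\<in>set_mset M. 2 * ww (M - {#i#}))"
proof -
  have "real k = (\<Sum>x\<in>set_mset M. real x * real (count M x))"
    using assms sum_mset_count[of M] by (simp add: odd_parts_def)
  then have "real k * ww M = (\<Sum>x\<in>set_mset M. real x * real (count M x) * ww M)"
    by (simp add: sum_distrib_right)
  also have "\<dots> = (\<Sum>i\<in>set_mset M. 2 * ww (M - {#i#}))"
    by (rule sum.cong) (use assms lemB in \<open>auto simp: odd_parts_def\<close>)
  finally show ?thesis .
qed

lemma setM_SS: "M \<in> odd_parts k \<Longrightarrow> set_mset M \<subseteq> SS k"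
  using elem_le[of _ M] by (auto simp: odd_parts_def SS_def Suc_le_eq)

lemma lemC:
  "(\<Sum>M\<in>odd_parts k. \<Sum>i\<in>set_mset M. g M i) =
   (\<Sum>i\<in>SS k. \<Sum>M\<in>{M\<in>odd_parts k. i \<in># M}. g M i)"
proof -
  have "(\<Sum>M\<in>odd_parts k. \<Sum>i\<in>set_mset M. g M i) =
        (\<Sum>M\<in>odd_parts k. \<Sum>i\<in>SS k. if i \<in># M then g M i else 0)"
  proof (rule sum.cong[OF refl])
    fix M assume M: "M \<in> odd_parts k"
    have "(\<Sum>i\<in>SS k. if i \<in># M then g M i else 0) = (\<Sum>i\<in>{i\<in>SS k. i \<in># M}. g M i)"
      by (rule sum.inter_filter[symmetric]) (simp add: SS_def)
    also have "{i\<in>SS k. i \<in># M} = set_mset M" using setM_SS[OF M] by auto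
    finally show "(\<Sum>i\<in>set_mset M. g M i) = (\<Sum>i\<in>SS k. if i \<in># M then g M i else 0)" by simp
  qed
  also have "\<dots> = (\<Sum>i\<in>SS k. \<Sum>M\<in>odd_parts k. if i \<in># M then g M i else 0)"
    by (rule sum.swap)
  also have "\<dots> = (\<Sum>i\<in>SS k. \<Sum>M\<in>{M\<in>odd_parts k. i \<in># M}. g M i)"
    by (rule sum.cong[OF refl], rule sum.inter_filter[symmetric]) (simp add: finite_odd_parts)
  finally show ?thesis .
qed

lemma lemD:
  assumes "i \<in> SS k"
  shows "(\<Sum>M\<in>{M\<in>odd_parts k. i \<in># M}. ww (M - {#i#})) = (\<Sum>M\<in>odd_parts (k - i). ww M)"
proof (rule sum.reindex_bij_witness[of _ "\<lambda>N. add_mset i N" "\<lambda>M. M - {#i#}"])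
  fix a assume a: "a \<in> {M \<in> odd_parts k. i \<in># M}"
  then show "add_mset i (a - {#i#}) = a" by simp
  have "sum_mset a = i + sum_mset (a - {#i#})" using a by (simp add: sum_mset.remove)
  then show "a - {#i#} \<in> odd_parts (k - i)"
    using a by (auto simp: odd_parts_def dest: in_diffD)
next
  fix b assume b: "b \<in> odd_parts (k - i)"
  then show "add_mset i b - {#i#} = b" by simp
  show "add_mset i b \<in> {M \<in> odd_parts k. i \<in># M}"
    using b assms by (auto simp: odd_parts_def SS_def)
qed simp

definition ff :: "nat \<Rightarrow> real" where "ff k = (\<Sum>M\<in>odd_parts k. ww M)"

lemma rec: "real k * ff k = 2 * (\<Sum>i\<in>SS k. ff (k - i))"
proof -
  have "real k * ff k = (\<Sum>M\<in>odd_parts k. \<Sum>i\<in>set_mset M. 2 * ww (M - {#i#}))"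
    unfolding ff_def sum_distrib_left by (rule sum.cong) (auto simp: lemA)
  also have "\<dots> = (\<Sum>i\<in>SS k. \<Sum>M\<in>{M\<in>odd_parts k. i \<in># M}. 2 * ww (M - {#i#}))"
    by (rule lemC)
  also have "\<dots> = (\<Sum>i\<in>SS k. 2 * ff (k - i))"
    unfolding ff_def by (rule sum.cong[OF refl]) (simp add: lemD sum_distrib_left[symmetric])
  finally show ?thesis by (simp add: sum_distrib_left)
qed

lemma ff0: "ff 0 = 1"
proof -
  have "odd_parts 0 = {{#}}"
  proof (auto simp: odd_parts_def)
    fix M :: "nat multiset" assume a: "\<forall>i\<in>#M. odd i \<and> 0 < i" "\<forall>x\<in>#M. x = 0"
    show "M = {#}"
    proof (rule multiset_eqI)
      fix x show "count M x = count {#} x"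
        by (cases "x \<in># M") (use a in \<open>auto simp: not_in_iff\<close>)
    qed
  qed
  then show ?thesis by (simp add: ff_def ww_def)
qed

lemma card_SS: "card (SS k) = (k + 1) div 2"
proof (induction k)
  case 0
  then show ?case by (simp add: SS_def)
next
  case (Suc k)
  have e: "SS (Suc k) = SS k \<union> (if odd (Suc k) then {Suc k} else {})"
    unfolding SS_def by (cases "odd (Suc k)") (auto simp: le_Suc_eq)
  have n: "Suc k \<notin> SS k" by (simp add: SS_def)
  have f: "finite (SS k)" by (simp add: SS_def)
  show ?case using Suc n f by (simp add: e)
qed

lemma lemE: "(\<Sum>i\<in>SS k. (if i = k then 1 else 2::real)) = real k"
proof (cases "odd k")
  case True
  have f: "finite (SS k)" by (simp add: SS_def)
  have kin: "k \<in> SS k" using True by (simp add: SS_def, presburger)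
  have "(\<Sum>i\<in>SS k. (if i = k then 1 else 2::real)) = 1 + 2 * real (card (SS k - {k}))"
    using sum.remove[OF f kin, of "\<lambda>i. if i = k then 1 else (2::real)"] by simp
  then have e: "(\<Sum>i\<in>SS k. (if i = k then 1 else 2::real)) = 1 + 2 * real (card (SS k) - 1)"
    using f kin by (simp add: card_Diff_singleton)
  obtain m where m: "k = 2 * m + 1" using True by (elim oddE) simp
  have "card (SS k) - 1 = m" using card_SS[of k] m by simp
  then show ?thesis using e m by simp
next
  case False
  have f: "finite (SS k)" by (simp add: SS_def)
  have "(\<Sum>i\<in>SS k. (if i = k then 1 else 2::real)) = (\<Sum>i\<in>SS k. 2)"
    by (rule sum.cong) (use False in \<open>auto simp: SS_def\<close>)
  then show ?thesis using False card_SS[of k] by (auto elim!: evenE)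
qed

lemma ff_pos: "0 < k \<Longrightarrow> ff k = 2"
proof (induction k rule: less_induct)
  case (less k)
  have "(\<Sum>i\<in>SS k. ff (k - i)) = (\<Sum>i\<in>SS k. (if i = k then 1 else 2::real))"
  proof (rule sum.cong[OF refl])
    fix i assume i: "i \<in> SS k"
    show "ff (k - i) = (if i = k then 1 else 2)"
      using i less.IH[of "k - i"] ff0 by (auto simp: SS_def)
  qed
  then have "real k * ff k = 2 * real k" using rec[of k] lemE[of k] by simp
  then show ?case using less.prems by simp
qed

theorem lemmaA9:
  fixes k :: nat
  assumes "0 < k"
  shows "(\<Sum>M\<in>odd_parts k. P_weight k M) = 1"
proof -
  have "(\<Sum>M\<in>odd_parts k. P_weight k M) = (\<Sum>M\<in>odd_parts k. ww M / 2)"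
  proof (rule sum.cong[OF refl])
    fix M assume M: "M \<in> odd_parts k"
    have sub: "set_mset M \<subseteq> {1..k}" using setM_SS[OF M] by (auto simp: SS_def)
    have "M \<noteq> {#}" using M assms by (auto simp: odd_parts_def)
    then have "size M \<ge> 1" by (simp add: Suc_le_eq nonempty_has_size)
    then have h: "(2::real) ^ size M = 2 ^ (size M - 1) * 2"
      by (metis Suc_diff_le diff_Suc_1 power_Suc2)
    show "P_weight k M = ww M / 2"
      unfolding P_weight_def ww_def prod_ext[OF finite_atLeastAtMost sub] h by simp
  qed
  also have "\<dots> = ff k / 2" by (simp add: ff_def sum_divide_distrib)
  finally show ?thesis using ff_pos[OF assms] by simp
qed

end
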